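(* Let $\underline{X}$ be an observation from a distribution $P_{(\theta,\underline{\eta})}$ indexed by $(\theta,\underline{\eta})$ in a parameter space $H$, with $\theta$ a real parameter of interest, and fix $\alpha\in[0,1]$. For a confidence interval $C(\underline{X})=[L(\underline{X}),U(\underline{X})]$ for $\theta$, define its modification $C^M$ by $$T(\underline{x},\theta_0)=\min\{\theta_0-L(\underline{x}),\,U(\underline{x})-\theta_0\},\quad h(\underline{x},\theta_0)=\sup_{(\theta,\underline{\eta})\in H,\ \theta=\theta_0}P_{(\theta,\underline{\eta})}\big(T(\underline{X},\theta_0)\le T(\underline{x},\theta_0)\big),$$ $$C^M(\underline{x})=\overline{\{\theta_0: h(\underline{x},\theta_0)>\alpha\}}.$$ If $C_0(\underline{X})$ is a $1-\alpha$ exact confidence interval for $\theta$, then $C_0^M(\underline{x})\subseteq C_0(\underline{x})$ for every $\underline{x}$. Consequently, for any confidence interval $C_0(\underline{X})$ of any level, $C_0^{M2}(\underline{x})=(C_0^M)^M(\underline{x})\subseteq C_0^M(\underline{x})$ for every $\underline{x}$.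
   Context: For a set $A$ of parameter values in $\mathbb{R}$, $\overline{A}$ denotes the smallest closed simply connected set (closed interval) containing $A$. An interval $C(\underline{X})$ for $\theta$ is "$1-\alpha$ exact" if $\inf_{(\theta,\underline{\eta})\in H}P_{(\theta,\underline{\eta})}(\theta\in C(\underline{X}))\ge1-\alpha$. *)

theory Defs
  imports "HOL-Probability.Probability"
begin

text \<open>A (set-valued) confidence region is C :: 'x => real set;
for an interval [L,U] its endpoints are recovered as Inf / Sup (in the extended reals,
so that possibly unbounded or empty intervals such as C^M can be modified again).\<close>

definition Tstat :: "('x \<Rightarrow> real set) \<Rightarrow> 'x \<Rightarrow> real \<Rightarrow> ereal" where
  "Tstat C x \<theta>0 = min (ereal \<theta>0 - Inf (ereal ` C x)) (Sup (ereal ` C x) - ereal \<theta>0)"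

definition hfun :: "(real \<times> 'e) set \<Rightarrow> (real \<times> 'e \<Rightarrow> 'x measure) \<Rightarrow> ('x \<Rightarrow> real set)
                     \<Rightarrow> 'x \<Rightarrow> real \<Rightarrow> ereal" where
  "hfun H P C x \<theta>0 =
     (SUP p \<in> {p \<in> H. fst p = \<theta>0}.
        ereal (measure (P p) {y \<in> space (P p). Tstat C y \<theta>0 \<le> Tstat C x \<theta>0}))"

definition interval_hull :: "real set \<Rightarrow> real set" where
  "interval_hull A = closure (convex hull A)"

definition modif :: "(real \<times> 'e) set \<Rightarrow> (real \<times> 'e \<Rightarrow> 'x measure) \<Rightarrow> real
                     \<Rightarrow> ('x \<Rightarrow> real set) \<Rightarrow> 'x \<Rightarrow> real set" where
  "modif H P \<alpha> C x = interval_hull {\<theta>0. hfun H P C x \<theta>0 > ereal \<alpha>}"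

definition exact_ci :: "(real \<times> 'e) set \<Rightarrow> (real \<times> 'e \<Rightarrow> 'x measure) \<Rightarrow> real
                        \<Rightarrow> ('x \<Rightarrow> real set) \<Rightarrow> bool" where
  "exact_ci H P \<alpha> C \<longleftrightarrow>
     (\<forall>p\<in>H. measure (P p) {y \<in> space (P p). fst p \<in> C y} \<ge> 1 - \<alpha>)"

end

theory Submission
  imports Defs
begin

definition tst :: "real set \<Rightarrow> real \<Rightarrow> ereal" where
  "tst S t = min (ereal t - Inf (ereal ` S)) (Sup (ereal ` S) - ereal t)"

lemma Tstat_tst: "Tstat C x t = tst (C x) t"
  unfolding Tstat_def tst_def by simp

lemma tst_nonneg:
  assumes "t \<in> S" shows "0 \<le> tst S t"
proof -
  have "Inf (ereal ` S) \<le> ereal t" using assms by (intro Inf_lower) auto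
  moreover have "ereal t \<le> Sup (ereal ` S)" using assms by (intro Sup_upper) auto
  ultimately show ?thesis unfolding tst_def by (simp add: ereal_diff_positive)
qed

lemma tst_neg:
  assumes cl: "closed S" and cv: "convex S" and nt: "t \<notin> S"
  shows "tst S t < 0"
proof -
  have "open (- S)" using cl by (simp add: open_Compl)
  moreover have "t \<in> - S" using nt by simp
  ultimately obtain e where e: "e > 0" "ball t e \<subseteq> - S"
    by (meson open_contains_ball)
  have far: "\<And>s. s \<in> S \<Longrightarrow> e \<le> \<bar>s - t\<bar>"
  proof (rule ccontr)
    fix s assume "s \<in> S" "\<not> e \<le> \<bar>s - t\<bar>"
    then have "s \<in> ball t e" by (simp add: dist_real_def abs_minus_commute)
    with e \<open>s \<in> S\<close> show False by auto
  qed
  have iv: "is_interval S" using cv by (simp add: is_interval_convex_1)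
  have "(\<forall>s\<in>S. s > t) \<or> (\<forall>s\<in>S. s < t)"
  proof (rule ccontr)
    assume "\<not> ?thesis"
    then obtain a b where "a \<in> S" "b \<in> S" "a \<le> t" "t \<le> b" by (auto simp: not_less)
    with iv nt show False unfolding is_interval_1 by blast
  qed
  then show ?thesis
  proof
    assume A: "\<forall>s\<in>S. s > t"
    have "ereal (t + e) \<le> Inf (ereal ` S)"
    proof (rule Inf_greatest)
      fix z assume "z \<in> ereal ` S"
      then obtain s where "s \<in> S" "z = ereal s" by auto
      with A far[of s] show "ereal (t + e) \<le> z" by auto
    qed
    then have "ereal t - Inf (ereal ` S) < 0"
      using e(1) by (cases "Inf (ereal ` S)") auto
    then show ?thesis unfolding tst_def by (simp add: min_less_iff_disj)
  next
    assume A: "\<forall>s\<in>S. s < t"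
    have "Sup (ereal ` S) \<le> ereal (t - e)"
    proof (rule Sup_least)
      fix z assume "z \<in> ereal ` S"
      then obtain s where "s \<in> S" "z = ereal s" by auto
      with A far[of s] show "z \<le> ereal (t - e)" by auto
    qed
    then have "Sup (ereal ` S) - ereal t < 0"
      using e(1) by (cases "Sup (ereal ` S)") auto
    then show ?thesis unfolding tst_def by (simp add: min_less_iff_disj)
  qed
qed

lemma key:
  assumes prob: "\<forall>p\<in>H. prob_space (P p)"
    and cc: "\<forall>x. closed (C x) \<and> convex (C x)"
    and Bex: "\<forall>p\<in>H. \<exists>B\<in>sets (P p). {y\<in>space (P p). fst p \<notin> C y} \<subseteq> B
                  \<and> measure (P p) B \<le> \<alpha>"
  shows "modif H P \<alpha> C x \<subseteq> C x"
proof -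
  have sub: "{\<theta>0. hfun H P C x \<theta>0 > ereal \<alpha>} \<subseteq> C x"
  proof
    fix \<theta>0 assume h: "\<theta>0 \<in> {\<theta>0. hfun H P C x \<theta>0 > ereal \<alpha>}"
    show "\<theta>0 \<in> C x"
    proof (rule ccontr)
      assume nx: "\<theta>0 \<notin> C x"
      have Tx: "Tstat C x \<theta>0 < 0" using tst_neg cc nx by (simp add: Tstat_tst)
      have "hfun H P C x \<theta>0 \<le> ereal \<alpha>"
        unfolding hfun_def
      proof (rule SUP_least)
        fix p assume p: "p \<in> {p\<in>H. fst p = \<theta>0}"
        then obtain B where B: "B \<in> sets (P p)" "{y\<in>space (P p). \<theta>0 \<notin> C y} \<subseteq> B"
          "measure (P p) B \<le> \<alpha>" using Bex by force
        interpret prob_space "P p" using prob p by auto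
        have "{y \<in> space (P p). Tstat C y \<theta>0 \<le> Tstat C x \<theta>0} \<subseteq> B"
        proof
          fix y assume "y \<in> {y \<in> space (P p). Tstat C y \<theta>0 \<le> Tstat C x \<theta>0}"
          then have "y \<in> space (P p)" "tst (C y) \<theta>0 < 0" using Tx by (auto simp: Tstat_tst)
          then have "\<theta>0 \<notin> C y" using tst_nonneg by force
          with \<open>y \<in> space (P p)\<close> B(2) show "y \<in> B" by auto
        qed
        then have "measure (P p) {y \<in> space (P p). Tstat C y \<theta>0 \<le> Tstat C x \<theta>0} \<le> \<alpha>"
          using finite_measure_mono[OF _ B(1)] B(3) by (meson order_trans)
        then show "ereal (measure (P p) {y \<in> space (P p). Tstat C y \<theta>0 \<le> Tstat C x \<theta>0})
                   \<le> ereal \<alpha>" by simp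
      qed
      with h show False by simp
    qed
  qed
  have "convex hull {\<theta>0. hfun H P C x \<theta>0 > ereal \<alpha>} \<subseteq> C x"
    using sub cc by (intro hull_minimal) auto
  then show ?thesis unfolding modif_def interval_hull_def
    using cc closure_minimal by blast
qed

lemma pvalue:
  fixes T :: "'x \<Rightarrow> ereal"
  assumes ps: "prob_space M" and a0: "0 \<le> \<alpha>"
    and ms: "\<forall>t. {z\<in>space M. T z \<le> t} \<in> sets M"
    and Es: "E \<subseteq> space M"
    and Ebd: "\<forall>y\<in>E. measure M {z\<in>space M. T z \<le> T y} \<le> \<alpha>"
  shows "\<exists>B\<in>sets M. E \<subseteq> B \<and> measure M B \<le> \<alpha>"
proof (cases "E = {}")
  case True
  then show ?thesis using a0 by (intro bexI[of _ "{}"]) auto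
next
  case False
  interpret prob_space M by fact
  define s where "s = Sup (T ` E)"
  show ?thesis
  proof (cases "s \<in> T ` E")
    case True
    then obtain y0 where y0: "y0 \<in> E" "s = T y0" by auto
    have su: "T y \<le> Sup (T ` E)" if "y \<in> E" for y
      by (rule Sup_upper) (use that in auto)
    have "E \<subseteq> {z\<in>space M. T z \<le> T y0}"
      using Es y0 su unfolding s_def by auto
    then show ?thesis using ms Ebd y0 by blast
  next
    case nS: False
    obtain f where f: "incseq f" "range f \<subseteq> T ` E" "Sup (T ` E) = Sup (range f)"
      using Sup_countable_SUP[of "T ` E"] False by auto
    define A where "A n = {z\<in>space M. T z \<le> f n}" for n
    have Ainc: "incseq A" using f(1) unfolding A_def incseq_def
      by (auto intro: order_trans)
    have Asets: "range A \<subseteq> sets M" using ms unfolding A_def by auto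
    have Abd: "measure M (A n) \<le> \<alpha>" for n
    proof -
      obtain y where "y \<in> E" "f n = T y" using f(2) by auto
      then show ?thesis using Ebd unfolding A_def by auto
    qed
    have EB: "E \<subseteq> (\<Union>n. A n)"
    proof
      fix y assume y: "y \<in> E"
      have "T y \<le> s" unfolding s_def using y by (auto intro: Sup_upper)
      moreover have "T y \<noteq> s" using nS y by auto
      ultimately have "T y < Sup (range f)" using f(3) s_def by auto
      then obtain i where "T y < f i" by (auto simp: less_Sup_iff)
      then show "y \<in> (\<Union>n. A n)" using y Es unfolding A_def by (auto intro!: exI[of _ i])
    qed
    have lim: "(\<lambda>i. measure M (A i)) \<longlonglongrightarrow> measure M (\<Union>n. A n)"
      by (rule finite_Lim_measure_incseq[OF Asets Ainc])
    have "measure M (\<Union>n. A n) \<le> \<alpha>"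
      using Abd by (intro LIMSEQ_le_const2[OF lim]) auto
    moreover have "(\<Union>n. A n) \<in> sets M" using Asets by auto
    ultimately show ?thesis using EB by blast
  qed
qed

lemma Inf_ereal_Icc: "L \<le> U \<Longrightarrow> Inf (ereal ` {L..U}) = ereal L"
  by (rule antisym) (auto intro!: Inf_lower Inf_greatest)

lemma Sup_ereal_Icc: "L \<le> U \<Longrightarrow> Sup (ereal ` {L..U}) = ereal U"
  by (rule antisym) (auto intro!: Sup_upper Sup_least)

theorem theorem2:
  fixes H :: "(real \<times> 'e) set" and P :: "real \<times> 'e \<Rightarrow> 'x measure"
    and \<alpha> :: real and L U :: "'x \<Rightarrow> real"
  assumes prob: "\<forall>p\<in>H. prob_space (P p)"
    and alpha: "0 \<le> \<alpha>" "\<alpha> \<le> 1"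
    and LU: "\<forall>x. L x \<le> U x"
    and meas: "\<forall>p\<in>H. L \<in> borel_measurable (P p) \<and> U \<in> borel_measurable (P p)"
  shows "(exact_ci H P \<alpha> (\<lambda>x. {L x..U x}) \<longrightarrow>
            (\<forall>x. modif H P \<alpha> (\<lambda>x. {L x..U x}) x \<subseteq> {L x..U x}))
       \<and> (\<forall>x. modif H P \<alpha> (modif H P \<alpha> (\<lambda>x. {L x..U x})) x
              \<subseteq> modif H P \<alpha> (\<lambda>x. {L x..U x}) x)"
proof
  let ?C = "\<lambda>x. {L x..U x}"
  show "exact_ci H P \<alpha> ?C \<longrightarrow> (\<forall>x. modif H P \<alpha> ?C x \<subseteq> ?C x)"
  proof (intro impI allI)
    fix x assume ex: "exact_ci H P \<alpha> ?C"
    show "modif H P \<alpha> ?C x \<subseteq> ?C x"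
    proof (rule key[OF prob])
      show "\<forall>x. closed (?C x) \<and> convex (?C x)" by auto
      show "\<forall>p\<in>H. \<exists>B\<in>sets (P p). {y\<in>space (P p). fst p \<notin> ?C y} \<subseteq> B
                  \<and> measure (P p) B \<le> \<alpha>"
      proof
        fix p assume p: "p \<in> H"
        interpret prob_space "P p" using prob p by auto
        have Lm: "L \<in> borel_measurable (P p)" and Um: "U \<in> borel_measurable (P p)"
          using meas p by auto
        have m1: "{y\<in>space (P p). fst p \<in> ?C y} \<in> sets (P p)"
        proof -
          have "{y\<in>space (P p). fst p \<in> ?C y} = {y\<in>space (P p). L y \<le> fst p} \<inter> {y\<in>space (P p). fst p \<le> U y}"
            by auto
          also have "\<dots> \<in> sets (P p)" using Lm Um by measurable
          finally show ?thesis .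
        qed
        have eq: "{y\<in>space (P p). fst p \<notin> ?C y} = space (P p) - {y\<in>space (P p). fst p \<in> ?C y}"
          by auto
        have "measure (P p) {y\<in>space (P p). fst p \<notin> ?C y} \<le> \<alpha>"
          unfolding eq using prob_compl[OF m1] ex p unfolding exact_ci_def by auto
        moreover have "{y\<in>space (P p). fst p \<notin> ?C y} \<in> sets (P p)"
          unfolding eq using m1 by auto
        ultimately show "\<exists>B\<in>sets (P p). {y\<in>space (P p). fst p \<notin> ?C y} \<subseteq> B
                  \<and> measure (P p) B \<le> \<alpha>" by blast
      qed
    qed
  qed
  show "\<forall>x. modif H P \<alpha> (modif H P \<alpha> ?C) x \<subseteq> modif H P \<alpha> ?C x"
  proof
    fix x
    show "modif H P \<alpha> (modif H P \<alpha> ?C) x \<subseteq> modif H P \<alpha> ?C x"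
    proof (rule key[OF prob])
      show "\<forall>x. closed (modif H P \<alpha> ?C x) \<and> convex (modif H P \<alpha> ?C x)"
        unfolding modif_def interval_hull_def by (auto intro: convex_closure)
      show "\<forall>p\<in>H. \<exists>B\<in>sets (P p). {y\<in>space (P p). fst p \<notin> modif H P \<alpha> ?C y} \<subseteq> B
                  \<and> measure (P p) B \<le> \<alpha>"
      proof
        fix p assume p: "p \<in> H"
        define \<theta>0 where "\<theta>0 = fst p"
        have Lm: "L \<in> borel_measurable (P p)" and Um: "U \<in> borel_measurable (P p)"
          using meas p by auto
        have Teq: "Tstat ?C z \<theta>0 = min (ereal \<theta>0 - ereal (L z)) (ereal (U z) - ereal \<theta>0)" for z
          unfolding Tstat_def using LU by (simp add: Inf_ereal_Icc Sup_ereal_Icc)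
        have ms: "\<forall>t. {z\<in>space (P p). Tstat ?C z \<theta>0 \<le> t} \<in> sets (P p)"
        proof
          fix t
          have fm: "(\<lambda>z. min (ereal \<theta>0 - ereal (L z)) (ereal (U z) - ereal \<theta>0)) \<in> borel_measurable (P p)"
            using Lm Um by measurable
          show "{z\<in>space (P p). Tstat ?C z \<theta>0 \<le> t} \<in> sets (P p)"
            unfolding Teq using fm by measurable
        qed
        define E where "E = {y\<in>space (P p). hfun H P ?C y \<theta>0 \<le> ereal \<alpha>}"
        have Ebd: "\<forall>y\<in>E. measure (P p) {z\<in>space (P p). Tstat ?C z \<theta>0 \<le> Tstat ?C y \<theta>0} \<le> \<alpha>"
        proof
          fix y assume "y \<in> E"
          then have hy: "hfun H P ?C y \<theta>0 \<le> ereal \<alpha>" unfolding E_def by auto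
          have "ereal (measure (P p) {z\<in>space (P p). Tstat ?C z \<theta>0 \<le> Tstat ?C y \<theta>0})
                 \<le> hfun H P ?C y \<theta>0"
            unfolding hfun_def using p \<theta>0_def by (intro SUP_upper) auto
          with hy show "measure (P p) {z\<in>space (P p). Tstat ?C z \<theta>0 \<le> Tstat ?C y \<theta>0} \<le> \<alpha>"
            using ereal_less_eq(3) order_trans by blast
        qed
        obtain B where B: "B \<in> sets (P p)" "E \<subseteq> B" "measure (P p) B \<le> \<alpha>"
          using pvalue[OF _ alpha(1) ms _ Ebd] prob p unfolding E_def by auto
        have "{y\<in>space (P p). fst p \<notin> modif H P \<alpha> ?C y} \<subseteq> E"
        proof
          fix y assume y: "y \<in> {y\<in>space (P p). fst p \<notin> modif H P \<alpha> ?C y}"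
          have "{\<theta>. hfun H P ?C y \<theta> > ereal \<alpha>} \<subseteq> modif H P \<alpha> ?C y"
            unfolding modif_def interval_hull_def
            using closure_subset hull_subset by (metis subset_trans)
          with y show "y \<in> E" unfolding E_def \<theta>0_def by (auto simp flip: not_less)
        qed
        with B show "\<exists>B\<in>sets (P p). {y\<in>space (P p). fst p \<notin> modif H P \<alpha> ?C y} \<subseteq> B
                  \<and> measure (P p) B \<le> \<alpha>" by blast
      qed
    qed
  qed
qed

end
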